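(* Let $\{x_i\}_{i\in[N]}$ be the global solution of the delayed consensus system described in the context. Then for almost all $t>2\tau$, \[ \frac{\mathrm d}{\mathrm dt}d_x(t)\le 2\int_{t-\tau}^t d_x(s-\tau)\,\mathrm ds+2\int_{t-\sigma}^t d_x(s-\tau)\,\mathrm ds+2\int_{t-\tau}^t\int_{s-\tau}^s\max_{l\in[N]}|\dot x_l(r)|\,\mathrm dr\,\mathrm ds+2\int_{t-\sigma}^t\int_{s-\tau}^s\max_{l\in[N]}|\dot x_l(r)|\,\mathrm dr\,\mathrm ds-N\underline a(t)d_x(t), \] where $\underline a(t):=\min_{i,j\in[N]}a_{ij}(t)$.
   Context: Let $N\ge2$, $d\ge1$ be integers, $[N]=\{1,\dots,N\}$, $0\le\sigma\le\tau$. Let $\psi:[0,\infty)\to[0,\infty)$ be continuous, nonincreasing, positive everywhere, with $\sup\psi\le1$. Given $x_i^0\in C([-\tau,0],\mathbb{R}^d)$, $\{x_i\}$ is the global solution (continuous on $[-\tau,\infty)$, continuously differentiable on $[0,\infty)$) of $\dot x_i(t)=\sum_{j\ne i}a_{ij}(t)(x_j(t-\tau)-x_i(t-\sigma))$ for $t>0$, with $a_{ij}(t)=\frac1{N-1}\psi(|x_i(t-\sigma)-x_j(t-\tau)|)$ for all $i,j\in[N]$, and $x_i=x_i^0$ on $[-\tau,0]$. $d_x(t):=\max_{i,j\in[N]}|x_i(t)-x_j(t)|$. *)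

theory Defs
  imports "HOL-Analysis.Analysis"
begin

text \<open>Agents are indexed by {1..N}; positions x i t live in a Euclidean space 'a
 (playing the role of R^d, d = DIM('a) \<ge> 1).\<close>

definition comm_weight ::
  "(real \<Rightarrow> real) \<Rightarrow> nat \<Rightarrow> real \<Rightarrow> real \<Rightarrow> (nat \<Rightarrow> real \<Rightarrow> 'a::euclidean_space)
     \<Rightarrow> nat \<Rightarrow> nat \<Rightarrow> real \<Rightarrow> real" where
  "comm_weight \<psi> N \<sigma> \<tau> x i j t =
     \<psi> (norm (x i (t - \<sigma>) - x j (t - \<tau>))) / (real N - 1)"

definition diam_x :: "nat \<Rightarrow> (nat \<Rightarrow> real \<Rightarrow> 'a::euclidean_space) \<Rightarrow> real \<Rightarrow> real" where
  "diam_x N x t = Max {norm (x i t - x j t) | i j. i \<in> {1..N} \<and> j \<in> {1..N}}"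

definition min_weight ::
  "(real \<Rightarrow> real) \<Rightarrow> nat \<Rightarrow> real \<Rightarrow> real \<Rightarrow> (nat \<Rightarrow> real \<Rightarrow> 'a::euclidean_space) \<Rightarrow> real \<Rightarrow> real" where
  "min_weight \<psi> N \<sigma> \<tau> x t =
     Min {comm_weight \<psi> N \<sigma> \<tau> x i j t | i j. i \<in> {1..N} \<and> j \<in> {1..N}}"

definition max_speed :: "nat \<Rightarrow> (nat \<Rightarrow> real \<Rightarrow> 'a::euclidean_space) \<Rightarrow> real \<Rightarrow> real" where
  "max_speed N x r = Max {norm (vector_derivative (x l) (at r)) | l. l \<in> {1..N}}"

end

theory Submission
  imports Defs
begin

lemma countable_isolated:
  fixes Z :: "real set"
  shows "countable {z\<in>Z. \<not> z islimpt Z}"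
proof -
  define I where "I = {z\<in>Z. \<not> z islimpt Z}"
  have IZ: "I \<subseteq> Z" unfolding I_def by blast
  have "\<exists>T. open T \<and> z \<in> T \<and> (\<forall>y\<in>Z. y \<in> T \<longrightarrow> y = z)" if "z \<in> I" for z
  proof -
    from that have "\<not> z islimpt Z" unfolding I_def by simp
    then obtain T where "z \<in> T" "open T" "\<forall>y\<in>Z. y \<in> T \<longrightarrow> y = z"
      unfolding islimpt_def by auto
    then show ?thesis by auto
  qed
  then obtain T where T: "\<And>z. z \<in> I \<Longrightarrow> open (T z) \<and> z \<in> T z \<and> (\<forall>y\<in>Z. y \<in> T z \<longrightarrow> y = z)"
    by metis
  have sp: "I sparse_in (\<Union>z\<in>I. T z)"
    unfolding sparse_in_def
  proof
    fix y assume "y \<in> (\<Union>z\<in>I. T z)"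
    then obtain z where z: "z \<in> I" "y \<in> T z" by blast
    have Tz: "open (T z)" "z \<in> T z" "\<And>w. w \<in> Z \<Longrightarrow> w \<in> T z \<Longrightarrow> w = z"
      using T[OF z(1)] by auto
    have "\<forall>y'\<in>T z. \<not> y' islimpt I"
    proof (intro ballI notI)
      fix y' assume y': "y' \<in> T z" "y' islimpt I"
      show False
      proof (cases "y' = z")
        case True
        obtain w where "w \<in> I" "w \<in> T z" "w \<noteq> y'"
          using islimptE[OF y'(2) y'(1) Tz(1)] by metis
        then show False using Tz(3) IZ True by blast
      next
        case False
        have o: "open (T z - {z})" using Tz(1) by auto
        have "y' \<in> T z - {z}" using y'(1) False by simp
        then obtain w where "w \<in> I" "w \<in> T z - {z}" "w \<noteq> y'"
          using islimptE[OF y'(2) _ o] by metis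
        then show False using Tz(3) IZ by blast
      qed
    qed
    then show "\<exists>B. y \<in> B \<and> open B \<and> (\<forall>y\<in>B. \<not> y islimpt I)"
      using z Tz by blast
  qed
  have "open (\<Union>z\<in>I. T z)" using T by auto
  from sparse_imp_countable[OF this sp] have "countable ((\<Union>z\<in>I. T z) \<inter> I)" .
  moreover have "(\<Union>z\<in>I. T z) \<inter> I = I" using T by blast
  ultimately show ?thesis unfolding I_def by simp
qed

lemma max_differentiable:
  fixes F g :: "real \<Rightarrow> real"
  assumes S: "open S" "t \<in> S" and cF: "continuous_on S F" and cg: "continuous_on S g"
    and dF: "F differentiable (at t)" and dg: "g differentiable (at t)"
    and Z: "F t \<noteq> g t \<or> t islimpt {s\<in>S. F s = g s}"
  shows "(\<lambda>s. max (F s) (g s)) differentiable (at t)"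
proof -
  consider "F t < g t" | "g t < F t" | "F t = g t" "t islimpt {s\<in>S. F s = g s}"
    using Z by fastforce
  then show ?thesis
  proof cases
    case 1
    obtain A where A: "open A" "A \<inter> S = {x\<in>S. F x < g x}"
      using open_Collect_less_Int[OF cF cg] by blast
    from dg obtain D where D: "(g has_derivative D) (at t)" unfolding differentiable_def by blast
    have o: "open (A \<inter> S)" using A(1) S(1) by (rule open_Int)
    have "((\<lambda>s. max (F s) (g s)) has_derivative D) (at t)"
      by (rule has_derivative_transform_within_open[OF D o])
         (use A S 1 in auto)
    then show ?thesis unfolding differentiable_def by blast
  next
    case 2
    obtain A where A: "open A" "A \<inter> S = {x\<in>S. g x < F x}"
      using open_Collect_less_Int[OF cg cF] by blast
    from dF obtain D where D: "(F has_derivative D) (at t)" unfolding differentiable_def by blast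
    have o: "open (A \<inter> S)" using A(1) S(1) by (rule open_Int)
    have "((\<lambda>s. max (F s) (g s)) has_derivative D) (at t)"
      by (rule has_derivative_transform_within_open[OF D o])
         (use A S 2 in auto)
    then show ?thesis unfolding differentiable_def by blast
  next
    case 3
    define Z where "Z = {s\<in>S. F s = g s}"
    define h where "h = (\<lambda>s. F s - g s)"
    have dh: "h differentiable (at t)" unfolding h_def using dF dg by auto
    then obtain D where D: "(h has_real_derivative D) (at t)"
      using DERIV_deriv_iff_real_differentiable by blast
    have tZ: "t \<in> Z" using 3 S unfolding Z_def by auto
    have D1: "(h has_vector_derivative D) (at t within Z)"
      using D has_real_derivative_iff_has_vector_derivative has_vector_derivative_at_within by blast
    have D2: "(h has_vector_derivative 0) (at t within Z)"
    proof (rule has_vector_derivative_transform_within[of "\<lambda>_. 0" 0 t Z 1])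
      show "((\<lambda>_. 0) has_vector_derivative 0) (at t within Z)" by simp
    qed (use tZ in \<open>auto simp: Z_def h_def\<close>)
    have "at t within Z \<noteq> bot" using 3 trivial_limit_within unfolding Z_def by blast
    from vector_derivative_unique_within[OF this D1 D2] have D0: "D = 0" .
    have ht: "h t = 0" using 3 unfolding h_def by simp
    have lim: "((\<lambda>y. (h y - h t) / (y - t)) \<longlongrightarrow> 0) (at t)"
      using D D0 has_field_derivative_iff by blast
    have "((\<lambda>y. (max (h y) 0 - max (h t) 0) / (y - t)) \<longlongrightarrow> 0) (at t)"
    proof (rule Lim_null_comparison)
      show "\<forall>\<^sub>F y in at t. norm ((max (h y) 0 - max (h t) 0) / (y - t)) \<le> \<bar>(h y - h t) / (y - t)\<bar>"
        using ht by (intro always_eventually allI) (auto simp: abs_divide intro!: divide_right_mono)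
      show "((\<lambda>y. \<bar>(h y - h t) / (y - t)\<bar>) \<longlongrightarrow> 0) (at t)"
        using tendsto_rabs_zero[OF lim] .
    qed
    then have "((\<lambda>y. max (h y) 0) has_real_derivative 0) (at t)"
      using has_field_derivative_iff by blast
    then have "(\<lambda>y. g y + max (h y) 0) differentiable (at t)"
      using dg by (auto intro!: derivative_intros simp: real_differentiable_def)
    moreover have "(\<lambda>y. g y + max (h y) 0) = (\<lambda>s. max (F s) (g s))"
      unfolding h_def by (auto simp: max_def)
    ultimately show ?thesis by simp
  qed
qed

lemma Max_continuous:
  fixes f :: "'i \<Rightarrow> 'b::topological_space \<Rightarrow> real"
  assumes "finite I" "I \<noteq> {}" "\<And>k. k \<in> I \<Longrightarrow> continuous_on S (f k)"
  shows "continuous_on S (\<lambda>s. Max ((\<lambda>k. f k s) ` I))"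
  using assms
proof (induction I rule: finite_ne_induct)
  case (singleton k)
  then show ?case by simp
next
  case (insert k I)
  have "continuous_on S (\<lambda>s. max (f k s) (Max ((\<lambda>k. f k s) ` I)))"
    using insert by (intro continuous_on_max) auto
  then show ?case using insert by simp
qed

lemma Max_differentiable_countable:
  fixes f :: "'i \<Rightarrow> real \<Rightarrow> real"
  assumes "finite I" "I \<noteq> {}" "open S" "\<And>k. k \<in> I \<Longrightarrow> continuous_on S (f k)"
    "\<And>k t. k \<in> I \<Longrightarrow> t \<in> S \<Longrightarrow> f k differentiable (at t)"
  shows "\<exists>C. countable C \<and> (\<forall>t\<in>S-C. (\<lambda>s. Max ((\<lambda>k. f k s) ` I)) differentiable (at t))"
  using assms
proof (induction I rule: finite_ne_induct)
  case (singleton k)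
  then show ?case by (intro exI[of _ "{}"]) auto
next
  case (insert k I)
  then obtain C where C: "countable C" "\<forall>t\<in>S-C. (\<lambda>s. Max ((\<lambda>k. f k s) ` I)) differentiable (at t)"
    by auto
  define F where "F = (\<lambda>s. Max ((\<lambda>k. f k s) ` I))"
  have cF: "continuous_on S F" unfolding F_def using insert by (intro Max_continuous) auto
  define Z where "Z = {s\<in>S. f k s = F s}"
  define C' where "C' = C \<union> {z\<in>Z. \<not> z islimpt Z}"
  have "countable C'" unfolding C'_def using C countable_isolated by blast
  moreover have "(\<lambda>s. Max ((\<lambda>k. f k s) ` insert k I)) differentiable (at t)" if t: "t \<in> S - C'" for t
  proof -
    have "(\<lambda>s. max (f k s) (F s)) differentiable (at t)"
    proof (rule max_differentiable[OF \<open>open S\<close> _ _ cF])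
      show "t \<in> S" using t by auto
      show "continuous_on S (f k)" using insert by auto
      show "f k differentiable at t" using insert t by auto
      show "F differentiable at t" using C t unfolding F_def C'_def by auto
      show "f k t \<noteq> F t \<or> t islimpt {s \<in> S. f k s = F s}"
        using t unfolding C'_def Z_def by auto
    qed
    then show ?thesis using insert unfolding F_def by simp
  qed
  ultimately show ?case by blast
qed

locale consensus =
  fixes N :: nat and \<sigma> \<tau> :: real and \<psi> :: "real \<Rightarrow> real"
    and x :: "nat \<Rightarrow> real \<Rightarrow> 'a::euclidean_space"
  assumes N: "N \<ge> 2"
    and \<sigma>0: "0 \<le> \<sigma>" and \<sigma>\<tau>: "\<sigma> \<le> \<tau>"
    and \<psi>_pos: "\<And>r. 0 \<le> r \<Longrightarrow> \<psi> r > 0"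
    and \<psi>_le1: "\<And>r. 0 \<le> r \<Longrightarrow> \<psi> r \<le> 1"
    and x_cont: "\<And>i. i \<in> {1..N} \<Longrightarrow> continuous_on {-\<tau>..} (x i)"
    and x_C1: "\<And>i. i \<in> {1..N} \<Longrightarrow>
                 \<exists>x'. continuous_on {0..} x' \<and>
                      (\<forall>t\<ge>0. (x i has_vector_derivative x' t) (at t within {0..}))"
    and x_ode: "\<And>i t. i \<in> {1..N} \<Longrightarrow> t > 0 \<Longrightarrow>
                 (x i has_vector_derivative
                    (\<Sum>j\<in>{1..N} - {i}. comm_weight \<psi> N \<sigma> \<tau> x i j t *\<^sub>R (x j (t - \<tau>) - x i (t - \<sigma>))))
                 (at t)"
begin

lemma \<tau>0: "0 \<le> \<tau>" using \<sigma>0 \<sigma>\<tau> by linarith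

abbreviation "dd \<equiv> diam_x N x"
abbreviation "ms \<equiv> max_speed N x"
abbreviation "mw \<equiv> min_weight \<psi> N \<sigma> \<tau> x"
abbreviation "cw \<equiv> comm_weight \<psi> N \<sigma> \<tau> x"

lemma P_fin: "finite ({1..N} \<times> {1..N})" and P_ne: "{1..N} \<times> {1..N} \<noteq> {}"
  using N by auto

lemma dd_eq: "dd s = Max ((\<lambda>p. norm (x (fst p) s - x (snd p) s)) ` ({1..N} \<times> {1..N}))"
  unfolding diam_x_def by (rule arg_cong[where f=Max]) force

lemma dd_ge: "i \<in> {1..N} \<Longrightarrow> j \<in> {1..N} \<Longrightarrow> norm (x i s - x j s) \<le> dd s"
  unfolding dd_eq by (rule Max_ge) (use P_fin in force)+

lemma dd_attain: "\<exists>i\<in>{1..N}. \<exists>j\<in>{1..N}. dd s = norm (x i s - x j s)"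
proof -
  have "dd s \<in> (\<lambda>p. norm (x (fst p) s - x (snd p) s)) ` ({1..N} \<times> {1..N})"
    unfolding dd_eq by (rule Max_in) (use P_fin P_ne in auto)
  then show ?thesis by force
qed

lemma dd_nonneg: "0 \<le> dd s"
proof -
  have "1 \<in> {1..N}" using N by simp
  from dd_ge[OF this this, of s] show ?thesis by simp
qed

lemma dd_cont: "continuous_on {-\<tau>..} dd"
  unfolding dd_eq
  by (rule Max_continuous[where f="\<lambda>p s. norm (x (fst p) s - x (snd p) s)", OF P_fin P_ne])
     (auto intro!: continuous_intros x_cont)

definition "Xd = (SOME X. \<forall>i\<in>{1..N}. continuous_on {0..} (X i) \<and>
                      (\<forall>t\<ge>0. (x i has_vector_derivative X i t) (at t within {0..})))"

lemma Xd: "\<forall>i\<in>{1..N}. continuous_on {0..} (Xd i) \<and>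
                      (\<forall>t\<ge>0. (x i has_vector_derivative Xd i t) (at t within {0..}))"
proof -
  have "\<exists>X. \<forall>i\<in>{1..N}. continuous_on {0..} (X i) \<and>
                      (\<forall>t\<ge>0. (x i has_vector_derivative X i t) (at t within {0..}))"
    using x_C1 by metis
  then show ?thesis unfolding Xd_def by (rule someI_ex)
qed

lemma Xd_cont: "i \<in> {1..N} \<Longrightarrow> continuous_on {0..} (Xd i)" using Xd by blast

lemma Xd_within: "i \<in> {1..N} \<Longrightarrow> 0 \<le> t \<Longrightarrow> (x i has_vector_derivative Xd i t) (at t within {0..})"
  using Xd by blast

lemma Xd_at: assumes "i \<in> {1..N}" "0 < t" shows "(x i has_vector_derivative Xd i t) (at t)"
proof -
  have "(x i has_vector_derivative Xd i t) (at t within {0<..})"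
    by (rule has_vector_derivative_within_subset[OF Xd_within]) (use assms in auto)
  then show ?thesis using has_vector_derivative_within_open[of t "{0<..}"] assms by auto
qed

lemma Xd_ode: "i \<in> {1..N} \<Longrightarrow> 0 < t \<Longrightarrow>
   Xd i t = (\<Sum>j\<in>{1..N} - {i}. cw i j t *\<^sub>R (x j (t - \<tau>) - x i (t - \<sigma>)))"
  using vector_derivative_unique_at[OF Xd_at x_ode] by blast

lemma ms_eq: assumes "0 < r" shows "ms r = Max ((\<lambda>l. norm (Xd l r)) ` {1..N})"
  unfolding max_speed_def
  by (rule arg_cong[where f=Max]) (use vector_derivative_at[OF Xd_at] assms in force)

lemma ms_ge: "l \<in> {1..N} \<Longrightarrow> 0 < r \<Longrightarrow> norm (Xd l r) \<le> ms r"
  unfolding ms_eq by (rule Max_ge) auto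

lemma ms_nonneg: "0 < r \<Longrightarrow> 0 \<le> ms r"
proof -
  assume "0 < r"
  have "1 \<in> {1..N}" using N by simp
  from ms_ge[OF this \<open>0 < r\<close>] show ?thesis using norm_ge_zero order_trans by blast
qed

lemma ms_cont: "continuous_on {0<..} ms"
proof -
  have c: "continuous_on {0<..} (\<lambda>r. norm (Xd l r))" if "l \<in> {1..N}" for l
    by (rule continuous_on_norm, rule continuous_on_subset[OF Xd_cont[OF that]]) auto
  have "continuous_on {0<..} (\<lambda>r. Max ((\<lambda>l. norm (Xd l r)) ` {1..N}))"
    by (rule Max_continuous[where f="\<lambda>l r. norm (Xd l r)", OF _ _ c]) (use N in auto)
  moreover have "continuous_on {0<..} ms \<longleftrightarrow> continuous_on {0<..} (\<lambda>r. Max ((\<lambda>l. norm (Xd l r)) ` {1..N}))"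
    by (rule continuous_on_cong) (auto simp: ms_eq)
  ultimately show ?thesis by simp
qed

lemma ms_int: "0 < a \<Longrightarrow> ms integrable_on {a..b}"
proof -
  assume a: "0 < a"
  have "{a..b} \<subseteq> {0<..}" using a by auto
  then show ?thesis by (rule integrable_continuous_interval[OF continuous_on_subset[OF ms_cont]])
qed

lemma ftc_bound:
  assumes "i \<in> {1..N}" "0 < a" "a \<le> b"
  shows "norm (x i b - x i a) \<le> integral {a..b} ms"
proof -
  have "(Xd i has_integral (x i b - x i a)) {a..b}"
  proof (rule fundamental_theorem_of_calculus[OF assms(3)])
    fix s assume "s \<in> {a..b}"
    then have "0 < s" using assms(2) by simp
    then show "(x i has_vector_derivative Xd i s) (at s within {a..b})"
      by (rule has_vector_derivative_at_within[OF Xd_at[OF assms(1)]])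
  qed
  then have "Xd i integrable_on {a..b}" "integral {a..b} (Xd i) = x i b - x i a"
    by (auto simp: has_integral_iff)
  moreover have "norm (integral {a..b} (Xd i)) \<le> integral {a..b} ms"
    by (rule integral_norm_bound_integral[OF \<open>Xd i integrable_on {a..b}\<close> ms_int[OF assms(2)]])
       (use ms_ge[OF assms(1)] assms(2) in simp)
  ultimately show ?thesis by simp
qed

lemma cw_nonneg: "0 \<le> cw i j t"
  unfolding comm_weight_def using \<psi>_pos[of "norm (x i (t - \<sigma>) - x j (t - \<tau>))"] N
  by (auto intro!: divide_nonneg_pos)

lemma cw_le: "cw i j t \<le> 1 / (real N - 1)"
  unfolding comm_weight_def using \<psi>_le1[of "norm (x i (t - \<sigma>) - x j (t - \<tau>))"] N
  by (auto intro!: divide_right_mono)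

lemma sum_cw: assumes "i \<in> {1..N}" shows "(\<Sum>j\<in>{1..N} - {i}. cw i j t) \<le> 1"
proof -
  have "(\<Sum>j\<in>{1..N} - {i}. cw i j t) \<le> of_nat (card ({1..N} - {i})) * (1 / (real N - 1))"
    by (rule sum_bounded_above) (rule cw_le)
  also have "card ({1..N} - {i}) = N - 1" using assms by simp
  also have "real (N - 1) * (1 / (real N - 1)) = 1" using N by (simp add: of_nat_diff)
  finally show ?thesis .
qed

lemma mw_le: assumes "i \<in> {1..N}" "j \<in> {1..N}" shows "mw t \<le> cw i j t"
proof -
  have eq: "{cw i j t |i j. i \<in> {1..N} \<and> j \<in> {1..N}} = (\<lambda>p. cw (fst p) (snd p) t) ` ({1..N} \<times> {1..N})"
    by force
  show ?thesis unfolding min_weight_def eq by (rule Min_le) (use assms P_fin in force)+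
qed

abbreviation "G s \<equiv> integral {s - \<tau>..s} ms"

lemma G_nonneg: "\<tau> < s \<Longrightarrow> 0 \<le> G s"
  by (rule Henstock_Kurzweil_Integration.integral_nonneg[OF ms_int]) (auto intro!: ms_nonneg)

lemma speed_bound:
  assumes s: "\<tau> < s"
  shows "ms s \<le> dd (s - \<tau>) + G s"
proof -
  have s0: "0 < s" "0 < s - \<tau>" using s \<tau>0 by auto
  define B where "B = dd (s - \<tau>) + G s"
  have B0: "0 \<le> B" unfolding B_def using dd_nonneg G_nonneg[OF s] by simp
  have "norm (Xd l s) \<le> B" if l: "l \<in> {1..N}" for l
  proof -
    have each: "norm (x m (s - \<tau>) - x l (s - \<sigma>)) \<le> B" if m: "m \<in> {1..N}" for m
    proof -
      have "norm (x m (s - \<tau>) - x l (s - \<sigma>)) \<le> norm (x m (s - \<tau>) - x l (s - \<tau>)) + norm (x l (s - \<tau>) - x l (s - \<sigma>))"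
        using norm_triangle_ineq[of "x m (s - \<tau>) - x l (s - \<tau>)" "x l (s - \<tau>) - x l (s - \<sigma>)"] by simp
      also have "norm (x m (s - \<tau>) - x l (s - \<tau>)) \<le> dd (s - \<tau>)" using dd_ge m l by blast
      also have "norm (x l (s - \<tau>) - x l (s - \<sigma>)) = norm (x l (s - \<sigma>) - x l (s - \<tau>))"
        by (rule norm_minus_commute)
      also have "\<dots> \<le> integral {s - \<tau>..s - \<sigma>} ms"
        by (rule ftc_bound) (use l s0 \<sigma>\<tau> in auto)
      also have "\<dots> \<le> G s"
        by (rule integral_subset_le) (use \<sigma>0 s0 in \<open>auto intro!: ms_int ms_nonneg\<close>)
      finally show ?thesis unfolding B_def by simp
    qed
    have "norm (Xd l s) = norm (\<Sum>m\<in>{1..N} - {l}. cw l m s *\<^sub>R (x m (s - \<tau>) - x l (s - \<sigma>)))"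
      using Xd_ode[OF l s0(1)] by simp
    also have "\<dots> \<le> (\<Sum>m\<in>{1..N} - {l}. norm (cw l m s *\<^sub>R (x m (s - \<tau>) - x l (s - \<sigma>))))"
      by (rule norm_sum)
    also have "\<dots> \<le> (\<Sum>m\<in>{1..N} - {l}. cw l m s * B)"
      by (rule sum_mono) (use each cw_nonneg in \<open>auto intro!: mult_left_mono\<close>)
    also have "\<dots> = (\<Sum>m\<in>{1..N} - {l}. cw l m s) * B" by (simp add: sum_distrib_right)
    also have "\<dots> \<le> 1 * B" by (rule mult_right_mono[OF sum_cw[OF l] B0])
    finally show ?thesis by simp
  qed
  then show ?thesis unfolding ms_eq[OF s0(1)] B_def using N by (subst Max_le_iff) auto
qed


lemma G_cont:
  assumes a: "\<tau> < a"
  shows "continuous_on {a..b} (\<lambda>s. G s)"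
proof -
  define a0 where "a0 = a - \<tau>"
  have a0: "0 < a0" using a unfolding a0_def by simp
  define F where "F = (\<lambda>u. integral {a0..u} ms)"
  have cF: "continuous_on {a0..b} F"
    unfolding F_def by (rule indefinite_integral_continuous_1[OF ms_int[OF a0]])
  have c1: "continuous_on {a..b} F"
    by (rule continuous_on_subset[OF cF]) (use \<tau>0 in \<open>auto simp: a0_def\<close>)
  have sub: "(\<lambda>s. s - \<tau>) ` {a..b} \<subseteq> {a0..b}" using \<tau>0 by (auto simp: a0_def)
  have c2: "continuous_on {a..b} (\<lambda>s. F (s - \<tau>))"
    by (rule continuous_on_compose2[OF cF _ sub]) (intro continuous_intros)
  have c3: "continuous_on {a..b} (\<lambda>s. F s - F (s - \<tau>))"
    using c1 c2 by (rule continuous_on_diff)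
  have eq: "G s = F s - F (s - \<tau>)" if s: "s \<in> {a..b}" for s
  proof -
    have "integral {a0..s - \<tau>} ms + integral {s - \<tau>..s} ms = integral {a0..s} ms"
      by (rule Henstock_Kurzweil_Integration.integral_combine) (use s \<tau>0 a0 in \<open>auto simp: a0_def intro!: ms_int\<close>)
    then show ?thesis unfolding F_def by simp
  qed
  have "continuous_on {a..b} (\<lambda>s. G s) \<longleftrightarrow> continuous_on {a..b} (\<lambda>s. F s - F (s - \<tau>))"
    by (rule continuous_on_cong) (use eq in auto)
  then show ?thesis using c3 by simp
qed

lemma dd\<tau>_cont:
  assumes a: "\<tau> < a"
  shows "continuous_on {a..b} (\<lambda>s. dd (s - \<tau>))"
proof -
  have sub: "(\<lambda>s. s - \<tau>) ` {a..b} \<subseteq> {-\<tau>..}" using a \<tau>0 by auto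
  show ?thesis
    by (rule continuous_on_compose2[OF dd_cont _ sub]) (intro continuous_intros)
qed

definition "E \<delta> t = integral {t - \<delta>..t} (\<lambda>s. dd (s - \<tau>)) + integral {t - \<delta>..t} (\<lambda>s. G s)"

lemma delay_bound:
  assumes t: "2 * \<tau> < t" and \<delta>: "0 \<le> \<delta>" "\<delta> \<le> \<tau>" and k: "k \<in> {1..N}"
  shows "norm (x k t - x k (t - \<delta>)) \<le> E \<delta> t"
proof -
  define a where "a = t - \<delta>"
  have a\<tau>: "\<tau> < a" and a0: "0 < a" and at: "a \<le> t"
    using t \<delta> \<tau>0 unfolding a_def by auto
  have i1: "(\<lambda>s. dd (s - \<tau>)) integrable_on {a..t}"
    by (rule integrable_continuous_interval[OF dd\<tau>_cont[OF a\<tau>]])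
  have i2: "(\<lambda>s. G s) integrable_on {a..t}"
    by (rule integrable_continuous_interval[OF G_cont[OF a\<tau>]])
  have "norm (x k t - x k (t - \<delta>)) = norm (x k t - x k a)" unfolding a_def ..
  also have "\<dots> \<le> integral {a..t} ms" by (rule ftc_bound[OF k a0 at])
  also have "\<dots> \<le> integral {a..t} (\<lambda>s. dd (s - \<tau>) + G s)"
  proof (rule integral_le[OF ms_int[OF a0]])
    show "(\<lambda>s. dd (s - \<tau>) + G s) integrable_on {a..t}" using i1 i2 by (rule integrable_add)
    fix s assume "s \<in> {a..t}"
    then have "\<tau> < s" using a\<tau> by simp
    then show "ms s \<le> dd (s - \<tau>) + G s" by (rule speed_bound)
  qed
  also have "\<dots> = E \<delta> t"
    unfolding E_def a_def[symmetric]
    by (rule Henstock_Kurzweil_Integration.integral_add[OF i1 i2])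
  finally show ?thesis .
qed

lemma E_nonneg: "2 * \<tau> < t \<Longrightarrow> 0 \<le> \<delta> \<Longrightarrow> \<delta> \<le> \<tau> \<Longrightarrow> 0 \<le> E \<delta> t"
proof -
  assume "2 * \<tau> < t" "0 \<le> \<delta>" "\<delta> \<le> \<tau>"
  moreover have "1 \<in> {1..N}" using N by simp
  ultimately have "norm (x 1 t - x 1 (t - \<delta>)) \<le> E \<delta> t" by (rule delay_bound)
  then show ?thesis using norm_ge_zero order_trans by blast
qed

lemma one_side:
  assumes t: "2 * \<tau> < t" and i: "i \<in> {1..N}" and jj: "jj \<in> {1..N}"
    and w: "w = x i t - x jj t" and nw: "norm w = dd t"
  shows "w \<bullet> Xd i t \<le> mw t * (\<Sum>k\<in>{1..N}. w \<bullet> (x k t - x i t)) + norm w * (E \<tau> t + E \<sigma> t)"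
proof -
  have t0: "0 < t" using t \<tau>0 by simp
  define M where "M = norm w * (E \<tau> t + E \<sigma> t)"
  have M0: "0 \<le> M" unfolding M_def
    using E_nonneg[OF t \<tau>0 order.refl] E_nonneg[OF t \<sigma>0 \<sigma>\<tau>] by simp
  define q where "q k = w \<bullet> (x k t - x i t)" for k
  have q_le: "q k \<le> 0" if k: "k \<in> {1..N}" for k
  proof -
    have "q k = w \<bullet> (x k t - x jj t) - w \<bullet> w" unfolding q_def w by (simp add: inner_diff_right)
    also have "w \<bullet> (x k t - x jj t) \<le> norm w * norm (x k t - x jj t)" by (rule norm_cauchy_schwarz)
    also have "norm w * norm (x k t - x jj t) \<le> norm w * dd t"
      by (rule mult_left_mono[OF dd_ge[OF k jj]]) simp
    also have "w \<bullet> w = norm w * dd t" using nw by (simp add: dot_square_norm power2_eq_square)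
    finally show ?thesis by simp
  qed
  have trm: "cw i k t * (w \<bullet> (x k (t - \<tau>) - x i (t - \<sigma>))) \<le> mw t * q k + cw i k t * M"
    if k: "k \<in> {1..N}" for k
  proof -
    have "w \<bullet> (x k (t - \<tau>) - x i (t - \<sigma>)) = q k + w \<bullet> ((x i t - x i (t - \<sigma>)) - (x k t - x k (t - \<tau>)))"
      unfolding q_def by (simp add: inner_diff_right algebra_simps)
    also have "w \<bullet> ((x i t - x i (t - \<sigma>)) - (x k t - x k (t - \<tau>))) \<le> norm w * norm ((x i t - x i (t - \<sigma>)) - (x k t - x k (t - \<tau>)))"
      by (rule norm_cauchy_schwarz)
    also have "\<dots> \<le> M"
    proof -
      have "norm ((x i t - x i (t - \<sigma>)) - (x k t - x k (t - \<tau>))) \<le> norm (x i t - x i (t - \<sigma>)) + norm (x k t - x k (t - \<tau>))"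
        by (rule norm_triangle_ineq4)
      also have "\<dots> \<le> E \<sigma> t + E \<tau> t"
        using delay_bound[OF t \<sigma>0 \<sigma>\<tau> i] delay_bound[OF t \<tau>0 order.refl k] by simp
      finally show ?thesis unfolding M_def by (simp add: mult_left_mono add.commute)
    qed
    finally have le: "w \<bullet> (x k (t - \<tau>) - x i (t - \<sigma>)) \<le> q k + M" by simp
    have "cw i k t * (w \<bullet> (x k (t - \<tau>) - x i (t - \<sigma>))) \<le> cw i k t * (q k + M)"
      by (rule mult_left_mono[OF le cw_nonneg])
    also have "\<dots> = cw i k t * q k + cw i k t * M" by (simp add: algebra_simps)
    also have "cw i k t * q k \<le> mw t * q k"
      by (rule mult_right_mono_neg[OF mw_le[OF i k] q_le[OF k]])
    finally show ?thesis by simp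
  qed
  have "w \<bullet> Xd i t = (\<Sum>k\<in>{1..N} - {i}. cw i k t * (w \<bullet> (x k (t - \<tau>) - x i (t - \<sigma>))))"
    unfolding Xd_ode[OF i t0] by (simp add: inner_sum_right)
  also have "\<dots> \<le> (\<Sum>k\<in>{1..N} - {i}. mw t * q k + cw i k t * M)"
    by (rule sum_mono) (use trm in auto)
  also have "\<dots> = mw t * (\<Sum>k\<in>{1..N} - {i}. q k) + (\<Sum>k\<in>{1..N} - {i}. cw i k t) * M"
    by (simp add: sum.distrib sum_distrib_left sum_distrib_right)
  also have "(\<Sum>k\<in>{1..N} - {i}. q k) = (\<Sum>k\<in>{1..N}. q k)"
  proof -
    have "(\<Sum>k\<in>{1..N}. q k) = q i + (\<Sum>k\<in>{1..N} - {i}. q k)"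
      by (rule sum.remove) (use i in auto)
    moreover have "q i = 0" unfolding q_def by simp
    ultimately show ?thesis by simp
  qed
  also have "(\<Sum>k\<in>{1..N} - {i}. cw i k t) * M \<le> 1 * M"
    by (rule mult_right_mono[OF sum_cw[OF i] M0])
  finally show ?thesis unfolding q_def M_def by simp
qed


lemma deriv_bound:
  assumes t: "2 * \<tau> < t" and dif: "dd differentiable (at t)"
  shows "deriv dd t \<le> 2 * E \<tau> t + 2 * E \<sigma> t - real N * mw t * dd t"
proof -
  have t0: "0 < t" using t \<tau>0 by simp
  define D where "D = deriv dd t"
  have DD: "(dd has_real_derivative D) (at t)"
    unfolding D_def using dif DERIV_deriv_iff_real_differentiable by blast
  have E0: "0 \<le> E \<tau> t" "0 \<le> E \<sigma> t"
    using E_nonneg[OF t \<tau>0 order.refl] E_nonneg[OF t \<sigma>0 \<sigma>\<tau>] by auto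
  show ?thesis
  proof (cases "dd t = 0")
    case True
    have "D = 0"
      by (rule DERIV_local_min[OF DD, of 1]) (use True dd_nonneg in auto)
    then show ?thesis using True E0 unfolding D_def by simp
  next
    case False
    then have dpos: "0 < dd t" using dd_nonneg[of t] by simp
    obtain i j where i: "i \<in> {1..N}" and j: "j \<in> {1..N}" and dij: "dd t = norm (x i t - x j t)"
      using dd_attain by blast
    define v where "v = x i t - x j t"
    have v0: "v \<noteq> 0" using dpos dij unfolding v_def by auto
    define g where "g = (\<lambda>s. norm (x i s - x j s))"
    define W where "W = Xd i t - Xd j t"
    have du: "((\<lambda>s. x i s - x j s) has_vector_derivative W) (at t)"
      unfolding W_def by (intro has_vector_derivative_diff Xd_at i j t0)
    have dn: "(norm has_derivative (\<lambda>h. h \<bullet> sgn v)) (at v)"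
      using has_derivative_norm[OF v0] .
    have "(g has_derivative (\<lambda>h. (h *\<^sub>R W) \<bullet> sgn v)) (at t)"
      unfolding g_def
      by (rule has_derivative_compose[OF du[unfolded has_vector_derivative_def]])
         (use dn in \<open>simp add: v_def\<close>)
    moreover have "(\<lambda>h. (h *\<^sub>R W) \<bullet> sgn v) = (*) (W \<bullet> sgn v)" by (auto simp: fun_eq_iff)
    ultimately have dg: "(g has_real_derivative (W \<bullet> sgn v)) (at t)"
      by (simp add: has_field_derivative_def)
    have "D - W \<bullet> sgn v = 0"
    proof (rule DERIV_local_min[OF DERIV_diff[OF DD dg], of 1])
      show "\<forall>y. \<bar>t - y\<bar> < 1 \<longrightarrow> dd t - g t \<le> dd y - g y"
        using dd_ge[OF i j] dij unfolding g_def by auto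
    qed simp
    then have Deq: "D = (W \<bullet> v) / dd t"
      using dij unfolding v_def by (simp add: sgn_div_norm inner_commute divide_inverse mult.commute)
    have s1: "v \<bullet> Xd i t \<le> mw t * (\<Sum>k\<in>{1..N}. v \<bullet> (x k t - x i t)) + norm v * (E \<tau> t + E \<sigma> t)"
      by (rule one_side[OF t i j v_def]) (use dij v_def in simp)
    have s2: "(x j t - x i t) \<bullet> Xd j t \<le> mw t * (\<Sum>k\<in>{1..N}. (x j t - x i t) \<bullet> (x k t - x j t))
               + norm (x j t - x i t) * (E \<tau> t + E \<sigma> t)"
      by (rule one_side[OF t j i refl]) (use dij norm_minus_commute in metis)
    have nv: "norm (x j t - x i t) = dd t" "norm v = dd t"
      using dij norm_minus_commute unfolding v_def by metis+
    have sumeq: "(\<Sum>k\<in>{1..N}. v \<bullet> (x k t - x i t)) + (\<Sum>k\<in>{1..N}. (x j t - x i t) \<bullet> (x k t - x j t))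
                 = - (real N * (dd t)\<^sup>2)"
    proof -
      have "(\<Sum>k\<in>{1..N}. v \<bullet> (x k t - x i t)) + (\<Sum>k\<in>{1..N}. (x j t - x i t) \<bullet> (x k t - x j t))
            = (\<Sum>k\<in>{1..N}. - (v \<bullet> v))"
        unfolding sum.distrib[symmetric]
        by (rule sum.cong) (auto simp: v_def inner_diff_left inner_diff_right inner_commute)
      also have "\<dots> = - (real N * (dd t)\<^sup>2)" using nv by (simp add: dot_square_norm)
      finally show ?thesis .
    qed
    have "W \<bullet> v = v \<bullet> Xd i t + (x j t - x i t) \<bullet> Xd j t"
      unfolding W_def v_def by (simp add: inner_diff_left inner_diff_right inner_commute)
    also have "\<dots> \<le> mw t * ((\<Sum>k\<in>{1..N}. v \<bullet> (x k t - x i t)) + (\<Sum>k\<in>{1..N}. (x j t - x i t) \<bullet> (x k t - x j t)))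
                  + 2 * dd t * (E \<tau> t + E \<sigma> t)"
      using s1 s2 nv by (simp add: algebra_simps)
    also have "\<dots> = dd t * (2 * E \<tau> t + 2 * E \<sigma> t - real N * mw t * dd t)"
      unfolding sumeq by (simp add: algebra_simps power2_eq_square)
    finally have "W \<bullet> v \<le> dd t * (2 * E \<tau> t + 2 * E \<sigma> t - real N * mw t * dd t)" .
    then have "(W \<bullet> v) / dd t \<le> 2 * E \<tau> t + 2 * E \<sigma> t - real N * mw t * dd t"
      using dpos by (simp add: divide_le_eq mult.commute)
    then show ?thesis unfolding D_def[symmetric] Deq .
  qed
qed


lemma dd_diff: "\<exists>C. countable C \<and> (\<forall>t\<in>{0<..}-C. dd differentiable (at t))"
proof -
  define P where "P = {1..N} \<times> {1..N}"
  define u where "u p s = x (fst p) s - x (snd p) s" for p s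
  define f where "f p s = u p s \<bullet> u p s" for p s
  have Pin: "fst p \<in> {1..N}" "snd p \<in> {1..N}" if "p \<in> P" for p using that unfolding P_def by auto
  have uc: "continuous_on {0<..} (u p)" if p: "p \<in> P" for p
  proof -
    have "continuous_on {0<..} (x (fst p))" "continuous_on {0<..} (x (snd p))"
      by (rule continuous_on_subset[OF x_cont[OF Pin(1)[OF p]]], use \<tau>0 in auto,
          rule continuous_on_subset[OF x_cont[OF Pin(2)[OF p]]], use \<tau>0 in auto)
    then show ?thesis unfolding u_def by (intro continuous_on_diff)
  qed
  have fc: "continuous_on {0<..} (f p)" if p: "p \<in> P" for p
    unfolding f_def using uc[OF p] by (intro continuous_on_inner)
  have ud: "(u p has_vector_derivative (Xd (fst p) s - Xd (snd p) s)) (at s)" if p: "p \<in> P" and s: "0 < s" for p s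
    unfolding u_def by (intro has_vector_derivative_diff Xd_at Pin[OF p] s)
  have fd: "f p differentiable (at s)" if p: "p \<in> P" and s: "s \<in> {0<..}" for p s
  proof -
    have "u p differentiable (at s)" using ud[OF p] s by (auto intro: differentiableI_vector)
    then show ?thesis unfolding f_def by simp
  qed
  have PF: "finite P" "P \<noteq> {}" unfolding P_def using P_fin P_ne by auto
  have "\<exists>C. countable C \<and> (\<forall>t\<in>{0<..}-C. (\<lambda>s. Max ((\<lambda>p. f p s) ` P)) differentiable (at t))"
    by (rule Max_differentiable_countable[where f=f, OF PF open_greaterThan]) (fact fc, fact fd)
  then obtain C1 where C1: "countable C1" "\<forall>t\<in>{0<..}-C1. (\<lambda>s. Max ((\<lambda>p. f p s) ` P)) differentiable (at t)"
    by blast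
  define D2 where "D2 s = Max ((\<lambda>p. f p s) ` P)" for s
  have msq: "mono sqrt" by (rule monoI) (rule real_sqrt_le_mono)
  have D2eq: "D2 = (\<lambda>s. Max ((\<lambda>p. f p s) ` P))" using D2_def by (simp add: fun_eq_iff)
  have dd_sqrt: "dd s = sqrt (D2 s)" for s
  proof -
    have "sqrt (D2 s) = Max (sqrt ` ((\<lambda>p. f p s) ` P))"
      unfolding D2_def
      by (rule mono_Max_commute[OF msq]) (use P_fin P_ne in \<open>simp_all add: P_def\<close>)
    also have "sqrt ` ((\<lambda>p. f p s) ` P) = (\<lambda>p. norm (x (fst p) s - x (snd p) s)) ` P"
      unfolding image_image f_def u_def by (simp add: dot_square_norm)
    finally show ?thesis unfolding dd_eq P_def by simp
  qed
  define Z0 where "Z0 = {s\<in>{0<..}. dd s = 0}"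
  define C where "C = C1 \<union> {z\<in>Z0. \<not> z islimpt Z0}"
  have "countable C" unfolding C_def using C1(1) countable_isolated by blast
  moreover have "dd differentiable (at t)" if t: "t \<in> {0<..} - C" for t
  proof (cases "dd t = 0")
    case False
    then have "0 < sqrt (D2 t)" using dd_nonneg[of t] dd_sqrt[of t] by simp
    then have pos: "0 < D2 t" by simp
    have "t \<in> {0<..} - C1" using t unfolding C_def by blast
    then have "D2 differentiable (at t)" unfolding D2eq using C1(2) by blast
    then obtain DE where DE: "(D2 has_real_derivative DE) (at t)"
      using DERIV_deriv_iff_real_differentiable by blast
    have "((\<lambda>s. sqrt (D2 s)) has_real_derivative (inverse (sqrt (D2 t)) / 2 * DE)) (at t)"
      by (rule DERIV_chain2[OF DERIV_real_sqrt[OF pos] DE])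
    moreover have "(\<lambda>s. sqrt (D2 s)) = dd" using dd_sqrt by (simp add: fun_eq_iff)
    ultimately have "(dd has_real_derivative (inverse (sqrt (D2 t)) / 2 * DE)) (at t)" by simp
    then show ?thesis by (rule differentiableI[OF has_field_derivative_imp_has_derivative])
  next
    case True
    have tZ: "t \<in> Z0" using t True unfolding Z0_def by auto
    then have lim: "t islimpt Z0" using t unfolding C_def by auto
    have nb: "at t within Z0 \<noteq> bot" using lim trivial_limit_within by blast
    have uzero: "u p s = 0" if p: "p \<in> P" and s: "s \<in> Z0" for p s
    proof -
      have "norm (u p s) \<le> dd s" unfolding u_def by (rule dd_ge[OF Pin[OF p]])
      then show ?thesis using s unfolding Z0_def by simp
    qed
    have lim_p: "((\<lambda>y. norm (u p y) / \<bar>y - t\<bar>) \<longlongrightarrow> 0) (at t)" if p: "p \<in> P" for p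
    proof -
      have t0: "0 < t" using t by simp
      have D1: "(u p has_vector_derivative (Xd (fst p) t - Xd (snd p) t)) (at t within Z0)"
        using ud[OF p t0] by (rule has_vector_derivative_at_within)
      have D2': "(u p has_vector_derivative 0) (at t within Z0)"
      proof (rule has_vector_derivative_transform_within[of "\<lambda>_. 0" 0 t Z0 1])
        show "((\<lambda>_. 0) has_vector_derivative 0) (at t within Z0)" by simp
      qed (use tZ uzero[OF p] in auto)
      have W0: "Xd (fst p) t - Xd (snd p) t = 0" by (rule vector_derivative_unique_within[OF nb D1 D2'])
      have "(u p has_derivative (\<lambda>h. h *\<^sub>R 0)) (at t)"
        using ud[OF p t0] W0 unfolding has_vector_derivative_def by simp
      then have "((\<lambda>y. norm ((u p y - u p t) - (y - t) *\<^sub>R 0) / norm (y - t)) \<longlongrightarrow> 0) (at t)"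
        unfolding has_derivative_iff_norm by blast
      moreover have "u p t = 0" by (rule uzero[OF p tZ])
      ultimately show ?thesis by simp
    qed
    have lim_sum: "((\<lambda>y. \<Sum>p\<in>P. norm (u p y) / \<bar>y - t\<bar>) \<longlongrightarrow> 0) (at t)"
      by (rule tendsto_null_sum) (rule lim_p)
    have "((\<lambda>y. (dd y - dd t) / (y - t)) \<longlongrightarrow> 0) (at t)"
    proof (rule Lim_null_comparison[OF _ lim_sum])
      show "\<forall>\<^sub>F y in at t. norm ((dd y - dd t) / (y - t)) \<le> (\<Sum>p\<in>P. norm (u p y) / \<bar>y - t\<bar>)"
      proof (intro always_eventually allI)
        fix y
        obtain a b where ab: "a \<in> {1..N}" "b \<in> {1..N}" "dd y = norm (x a y - x b y)"
          using dd_attain by blast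
        have abP: "(a, b) \<in> P" using ab unfolding P_def by simp
        have "dd y \<le> (\<Sum>p\<in>P. norm (u p y))"
          using ab(3) member_le_sum[OF abP, of "\<lambda>p. norm (u p y)"] P_fin unfolding u_def P_def by simp
        then have "dd y / \<bar>y - t\<bar> \<le> (\<Sum>p\<in>P. norm (u p y)) / \<bar>y - t\<bar>"
          by (rule divide_right_mono) simp
        then show "norm ((dd y - dd t) / (y - t)) \<le> (\<Sum>p\<in>P. norm (u p y) / \<bar>y - t\<bar>)"
          using True dd_nonneg[of y] by (simp add: sum_divide_distrib abs_divide)
      qed
    qed
    then have "(dd has_real_derivative 0) (at t)" using has_field_derivative_iff by blast
    then show ?thesis by (rule differentiableI[OF has_field_derivative_imp_has_derivative])
  qed
  ultimately show ?thesis by blast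
qed

end


theorem lemma3p2:
  fixes N :: nat and \<sigma> \<tau> :: real and \<psi> :: "real \<Rightarrow> real"
    and x :: "nat \<Rightarrow> real \<Rightarrow> 'a::euclidean_space"
  assumes N: "N \<ge> 2"
    and \<sigma>: "0 \<le> \<sigma>" "\<sigma> \<le> \<tau>"
    and \<psi>_cont: "continuous_on {0..} \<psi>"
    and \<psi>_mono: "\<And>r s. 0 \<le> r \<Longrightarrow> r \<le> s \<Longrightarrow> \<psi> s \<le> \<psi> r"
    and \<psi>_pos: "\<And>r. 0 \<le> r \<Longrightarrow> \<psi> r > 0"
    and \<psi>_le1: "\<And>r. 0 \<le> r \<Longrightarrow> \<psi> r \<le> 1"
    and x_cont: "\<And>i. i \<in> {1..N} \<Longrightarrow> continuous_on {-\<tau>..} (x i)"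
    and x_C1: "\<And>i. i \<in> {1..N} \<Longrightarrow>
                 \<exists>x'. continuous_on {0..} x' \<and>
                      (\<forall>t\<ge>0. (x i has_vector_derivative x' t) (at t within {0..}))"
    and x_ode: "\<And>i t. i \<in> {1..N} \<Longrightarrow> t > 0 \<Longrightarrow>
                 (x i has_vector_derivative
                    (\<Sum>j\<in>{1..N} - {i}. comm_weight \<psi> N \<sigma> \<tau> x i j t *\<^sub>R (x j (t - \<tau>) - x i (t - \<sigma>))))
                 (at t)"
  shows "AE t in lborel. t > 2 * \<tau> \<longrightarrow>
           (diam_x N x) differentiable (at t) \<and>
           deriv (diam_x N x) t \<le>
              2 * integral {t - \<tau>..t} (\<lambda>s. diam_x N x (s - \<tau>))
            + 2 * integral {t - \<sigma>..t} (\<lambda>s. diam_x N x (s - \<tau>))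
            + 2 * integral {t - \<tau>..t} (\<lambda>s. integral {s - \<tau>..s} (\<lambda>r. max_speed N x r))
            + 2 * integral {t - \<sigma>..t} (\<lambda>s. integral {s - \<tau>..s} (\<lambda>r. max_speed N x r))
            - real N * min_weight \<psi> N \<sigma> \<tau> x t * diam_x N x t"
proof -
  interpret c: consensus N \<sigma> \<tau> \<psi> x
    by (rule consensus.intro) (fact N, fact \<sigma>(1), fact \<sigma>(2), fact \<psi>_pos, fact \<psi>_le1,
        fact x_cont, fact x_C1, fact x_ode)
  obtain C where C: "countable C" "\<forall>t\<in>{0<..}-C. diam_x N x differentiable (at t)"
    using c.dd_diff by blast
  show ?thesis
  proof (rule AE_I'[OF countable_imp_null_set_lborel[OF C(1)]], rule subsetI, rule ccontr)
    fix t assume tin: "t \<in> {t \<in> space lborel. \<not> (t > 2 * \<tau> \<longrightarrow>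
           (diam_x N x) differentiable (at t) \<and>
           deriv (diam_x N x) t \<le>
              2 * integral {t - \<tau>..t} (\<lambda>s. diam_x N x (s - \<tau>))
            + 2 * integral {t - \<sigma>..t} (\<lambda>s. diam_x N x (s - \<tau>))
            + 2 * integral {t - \<tau>..t} (\<lambda>s. integral {s - \<tau>..s} (\<lambda>r. max_speed N x r))
            + 2 * integral {t - \<sigma>..t} (\<lambda>s. integral {s - \<tau>..s} (\<lambda>r. max_speed N x r))
            - real N * min_weight \<psi> N \<sigma> \<tau> x t * diam_x N x t)}" and tC: "t \<notin> C"
    have t: "2 * \<tau> < t" using tin by simp
    have t0: "0 < t" using t c.\<tau>0 by simp
    have dif: "diam_x N x differentiable (at t)" using C(2) t0 tC by blast
    have "deriv (diam_x N x) t \<le> 2 * c.E \<tau> t + 2 * c.E \<sigma> t - real N * min_weight \<psi> N \<sigma> \<tau> x t * diam_x N x t"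
      by (rule c.deriv_bound[OF t dif])
    then show False using tin dif unfolding c.E_def by (simp add: algebra_simps)
  qed
qed

end
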